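(* For every integer $i\ge 1$, $\lim_{k\to\infty}\overline{\alpha}(\{1,2i+1,2k\})=\frac12$.
   Context: For a finite set $S$ of positive integers, the distance graph $G(S)$ has vertex set $\mathbb{Z}$, with $i,j$ adjacent iff $|i-j|\in S$. The density of $A\subseteq\mathbb{Z}$ is $\delta(A)=\limsup_{N\to\infty}\frac{|A\cap[-N,N]|}{2N+1}$, and the independence ratio $\overline{\alpha}(S)$ is the supremum of $\delta(A)$ over independent sets $A$ of $G(S)$. *)

theory Defs
  imports "HOL-Analysis.Analysis"
begin

definition density :: "int set \<Rightarrow> ereal" where
  "density A = limsup (\<lambda>N::nat. ereal (real (card (A \<inter> {- int N .. int N})) / real (2 * N + 1)))"

definition indep_dist :: "int set \<Rightarrow> int set \<Rightarrow> bool" where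
  "indep_dist S A \<longleftrightarrow> (\<forall>i\<in>A. \<forall>j\<in>A. i \<noteq> j \<longrightarrow> \<bar>i - j\<bar> \<notin> S)"

definition indep_ratio :: "int set \<Rightarrow> ereal" where
  "indep_ratio S = (SUP A \<in> {A. indep_dist S A}. density A)"

end

theory Submission
  imports Defs "HOL-Real_Asymp.Real_Asymp"
begin

lemma upper_card:
  assumes "indep_dist S A" "1 \<in> S"
  shows "card (A \<inter> {- int N .. int N}) \<le> N + 1"
proof -
  let ?g = "\<lambda>x::int. nat ((x + int N) div 2)"
  have inj: "inj_on ?g (A \<inter> {- int N .. int N})"
  proof (rule inj_onI)
    fix x y assume x: "x \<in> A \<inter> {- int N .. int N}" and y: "y \<in> A \<inter> {- int N .. int N}"
      and e: "?g x = ?g y"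
    have "(x + int N) div 2 = (y + int N) div 2" using e x y by (simp add: nat_eq_iff2)
    hence "\<bar>x - y\<bar> \<le> 1" by linarith
    show "x = y"
    proof (rule ccontr)
      assume "x \<noteq> y"
      with \<open>\<bar>x - y\<bar> \<le> 1\<close> have "\<bar>x - y\<bar> = 1" by linarith
      have "x \<in> A" "y \<in> A" using x y by auto
      hence "\<bar>x - y\<bar> \<notin> S" using assms(1) \<open>x \<noteq> y\<close> unfolding indep_dist_def by blast
      with assms(2) \<open>\<bar>x - y\<bar> = 1\<close> show False by simp
    qed
  qed
  have "?g ` (A \<inter> {- int N .. int N}) \<subseteq> {0..N}" by auto
  hence "card (?g ` (A \<inter> {- int N .. int N})) \<le> card {0..N}" by (intro card_mono) auto
  thus ?thesis using card_image[OF inj] by simp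
qed

lemma density_upper:
  assumes "indep_dist S A" "1 \<in> S"
  shows "density A \<le> ereal (1/2)"
proof -
  have le: "\<And>N. ereal (real (card (A \<inter> {- int N .. int N})) / real (2 * N + 1))
      \<le> ereal ((real N + 1) / (2 * real N + 1))"
  proof -
    fix N
    have "real (card (A \<inter> {- int N .. int N})) \<le> real N + 1" using upper_card[OF assms, of N] by linarith
    thus "ereal (real (card (A \<inter> {- int N .. int N})) / real (2 * N + 1))
      \<le> ereal ((real N + 1) / (2 * real N + 1))"
      by (simp add: divide_right_mono add.commute)
  qed
  have lim: "(\<lambda>N::nat. (real N + 1) / (2 * real N + 1)) \<longlonglongrightarrow> 1/2" by real_asymp
  have "density A \<le> limsup (\<lambda>N::nat. ereal ((real N + 1) / (2 * real N + 1)))"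
    unfolding density_def by (intro Limsup_mono) (use le in auto)
  also have "\<dots> = ereal (1/2)"
    using lim_imp_Limsup[OF trivial_limit_sequentially tendsto_ereal[OF lim]] by simp
  finally show ?thesis .
qed

lemma density_lower:
  fixes P :: int and R :: "int set"
  assumes P: "P > 0" and R: "R \<subseteq> {0..<P}"
  shows "ereal (real (card R) / real_of_int P) \<le> density {x. \<exists>q. \<exists>r\<in>R. x = q*P + r}"
proof -
  define A where "A = {x. \<exists>q. \<exists>r\<in>R. x = q*P + r}"
  have fin: "finite R" using R finite_subset by blast
  have cb: "real (card R) * 2 * (real N / P - 1) \<le> real (card (A \<inter> {- int N .. int N}))" for N
  proof -
    define M where "M = int N div P"
    have M0: "M \<ge> 0" using P by (simp add: M_def pos_imp_zdiv_nonneg_iff)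
    have MP: "M * P \<le> int N" 
    proof -
      have "int N div P * P + int N mod P = int N" by (rule div_mult_mod_eq)
      moreover have "int N mod P \<ge> 0" using P by simp
      ultimately show ?thesis unfolding M_def by linarith
    qed
    have MP2: "int N < M * P + P"
    proof -
      have "int N div P * P + int N mod P = int N" by (rule div_mult_mod_eq)
      moreover have "int N mod P < P" using P by simp
      ultimately show ?thesis unfolding M_def by linarith
    qed
    let ?f = "\<lambda>(q, r). q * P + r"
    have sub: "?f ` ({-M..<M} \<times> R) \<subseteq> A \<inter> {- int N .. int N}"
    proof
      fix z assume "z \<in> ?f ` ({-M..<M} \<times> R)"
      then obtain q r where q: "-M \<le> q" "q < M" and r: "r \<in> R" and z: "z = q*P + r" by auto
      have r0: "0 \<le> r" "r < P" using r R by auto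
      have "-M * P \<le> q * P" using q P by (intro mult_right_mono) auto
      moreover have "q * P \<le> (M - 1) * P" using q P by (intro mult_right_mono) auto
      ultimately have "z \<in> {- int N .. int N}" using r0 MP z by (auto simp: algebra_simps)
      moreover have "z \<in> A" unfolding A_def using z r by blast
      ultimately show "z \<in> A \<inter> {- int N .. int N}" by blast
    qed
    have inj: "inj_on ?f ({-M..<M} \<times> R)"
    proof (rule inj_onI, clarsimp)
      fix q r q' r' assume "r \<in> R" "r' \<in> R" "q * P + r = q' * P + r'"
      hence "(q * P + r) div P = (q' * P + r') div P" "(q * P + r) mod P = (q' * P + r') mod P" by auto
      moreover have "0 \<le> r" "r < P" "0 \<le> r'" "r' < P" using \<open>r \<in> R\<close> \<open>r' \<in> R\<close> R by auto
      ultimately show "q = q' \<and> r = r'" using P by simp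
    qed
    have "card (?f ` ({-M..<M} \<times> R)) = nat (2*M) * card R"
      using card_image[OF inj] by (simp add: card_cartesian_product)
    hence "nat (2*M) * card R \<le> card (A \<inter> {- int N .. int N})"
      using card_mono[OF _ sub] by (metis finite_Int finite_atLeastAtMost_int)
    hence "real_of_int (2*M) * real (card R) \<le> real (card (A \<inter> {- int N .. int N}))"
      using M0 by (metis of_nat_le_iff of_nat_mult of_nat_nat zero_le_mult_iff zero_le_numeral) 
    moreover have "real N / P - 1 \<le> real_of_int M"
    proof -
      have "real N < (real_of_int M + 1) * P" using MP2 by (simp add: algebra_simps) (metis of_int_less_iff of_int_add of_int_mult of_int_of_nat_eq)
      thus ?thesis using P by (simp add: field_simps)
    qed
    hence "real (card R) * 2 * (real N / P - 1) \<le> real (card R) * 2 * real_of_int M"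
      by (intro mult_left_mono) auto
    moreover have "real (card R) * 2 * real_of_int M = real_of_int (2*M) * real (card R)" by simp
    ultimately show ?thesis by linarith
  qed
  define c where "c = real (card R) * 2 / P"
  have lim0: "(\<lambda>N::nat. (real N - P) / (2 * real N + 1)) \<longlonglongrightarrow> 1/2" by real_asymp
  have eqh: "real (card R) * 2 * (real N / P - 1) / real (2 * N + 1) = c * ((real N - P) / (2 * real N + 1))" for N
    using P by (simp add: c_def field_simps)
  have lim: "(\<lambda>N::nat. real (card R) * 2 * (real N / P - 1) / real (2 * N + 1)) \<longlonglongrightarrow> real (card R) / P"
  proof -
    have "(\<lambda>N::nat. c * ((real N - P) / (2 * real N + 1))) \<longlonglongrightarrow> c * (1/2)" by (intro tendsto_mult_left lim0)
    moreover have "c * (1/2) = real (card R) / P" by (simp add: c_def)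
    ultimately have "(\<lambda>N::nat. c * ((real N - P) / (2 * real N + 1))) \<longlonglongrightarrow> real (card R) / P" by simp
    moreover have "(\<lambda>N::nat. real (card R) * 2 * (real N / P - 1) / real (2 * N + 1)) = (\<lambda>N::nat. c * ((real N - P) / (2 * real N + 1)))"
      by (rule ext, rule eqh)
    ultimately show ?thesis by simp
  qed
  have "ereal (real (card R) / real_of_int P) = limsup (\<lambda>N::nat. ereal (real (card R) * 2 * (real N / P - 1) / real (2 * N + 1)))"
    using lim_imp_Limsup[OF trivial_limit_sequentially tendsto_ereal[OF lim]] by simp
  also have "\<dots> \<le> density A" unfolding density_def
    by (intro Limsup_mono always_eventually allI) (simp add: divide_right_mono cb)
  finally show ?thesis unfolding A_def .
qed

lemma core_contra:
  fixes i K q1 q2 j1 j2 r1 r2 d :: int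
  assumes "i \<ge> 1" "K \<ge> i + 2" "0 \<le> j1" "j1 < K - i - 1" "0 \<le> j2" "j2 < K - i - 1"
    "r1 = 2*j1 \<or> r1 = 2*K + 2*j1 + 1" "r2 = 2*j2 \<or> r2 = 2*K + 2*j2 + 1"
    "d = 1 \<or> d = 2*i+1 \<or> d = 2*K" "q2*(4*K) + r2 = q1*(4*K) + r1 + d"
  shows False
proof -
  define t where "t = q2 - q1"
  have tX: "t*(4*K) = r1 + d - r2" using assms(10) unfolding t_def by (simp add: algebra_simps)
  have lo: "t*(4*K) > -(4*K)" using tX assms by auto
  have hi: "t*(4*K) < 2*(4*K)" using tX assms by auto
  have K0: "4*K > 0" using assms by simp
  have "t > -1"
  proof (rule ccontr)
    assume "\<not> t > -1" hence "t \<le> -1" by simp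
    hence "t*(4*K) \<le> (-1)*(4*K)" using K0 by (intro mult_right_mono) auto
    thus False using lo by simp
  qed
  moreover have "t < 2"
  proof (rule ccontr)
    assume "\<not> t < 2" hence "t \<ge> 2" by simp
    hence "t*(4*K) \<ge> 2*(4*K)" using K0 by (intro mult_right_mono) auto
    thus False using hi by simp
  qed
  ultimately have "t = 0 \<or> t = 1" by auto
  hence "r1 + d - r2 = 0 \<or> r1 + d - r2 = 4*K" using tX by auto
  thus False using assms(1-9) by (elim disjE; simp; presburger)
qed

lemma indep_constr:
  fixes i K :: int
  assumes "i \<ge> 1" "K \<ge> i + 2"
  shows "indep_dist {1, 2*i+1, 2*K}
    {x. \<exists>q. \<exists>r\<in>{r. \<exists>j. 0 \<le> j \<and> j < K - i - 1 \<and> (r = 2*j \<or> r = 2*K + 2*j + 1)}. x = q*(4*K) + r}"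
  unfolding indep_dist_def
proof (intro ballI impI)
  fix x y
  assume x: "x \<in> {x. \<exists>q. \<exists>r\<in>{r. \<exists>j. 0 \<le> j \<and> j < K - i - 1 \<and> (r = 2*j \<or> r = 2*K + 2*j + 1)}. x = q*(4*K) + r}"
    and y: "y \<in> {x. \<exists>q. \<exists>r\<in>{r. \<exists>j. 0 \<le> j \<and> j < K - i - 1 \<and> (r = 2*j \<or> r = 2*K + 2*j + 1)}. x = q*(4*K) + r}"
    and ne: "x \<noteq> y"
  from x obtain q1 j1 r1 where 1: "0 \<le> j1" "j1 < K - i - 1" "r1 = 2*j1 \<or> r1 = 2*K + 2*j1 + 1" "x = q1*(4*K) + r1" by blast
  from y obtain q2 j2 r2 where 2: "0 \<le> j2" "j2 < K - i - 1" "r2 = 2*j2 \<or> r2 = 2*K + 2*j2 + 1" "y = q2*(4*K) + r2" by blast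
  show "\<bar>x - y\<bar> \<notin> {1, 2*i+1, 2*K}"
  proof
    assume d: "\<bar>x - y\<bar> \<in> {1, 2*i+1, 2*K}"
    hence dd: "\<bar>x - y\<bar> = 1 \<or> \<bar>x - y\<bar> = 2*i+1 \<or> \<bar>x - y\<bar> = 2*K" by simp
    show False
    proof (cases "x < y")
      case True
      hence "q2*(4*K) + r2 = q1*(4*K) + r1 + \<bar>x - y\<bar>" using 1(4) 2(4) by simp
      thus False by (rule core_contra[OF assms 1(1,2) 2(1,2) 1(3) 2(3) dd])
    next
      case False
      hence "q1*(4*K) + r1 = q2*(4*K) + r2 + \<bar>x - y\<bar>" using 1(4) 2(4) by simp
      thus False by (rule core_contra[OF assms 2(1,2) 1(1,2) 2(3) 1(3) dd])
    qed
  qed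
qed

lemma card_R:
  fixes m K :: int
  assumes "m \<ge> 0"
  shows "card {r. \<exists>j. 0 \<le> j \<and> j < m \<and> (r = 2*j \<or> r = 2*K + 2*j + 1)} = 2 * nat m"
proof -
  have eq: "{r. \<exists>j. 0 \<le> j \<and> j < m \<and> (r = 2*j \<or> r = 2*K + 2*j + 1)}
      = (\<lambda>j. 2*j) ` {0..<m} \<union> (\<lambda>j. 2*K + 2*j + 1) ` {0..<m}" by auto
  have disj: "(\<lambda>j. 2*j) ` {0..<m} \<inter> (\<lambda>j. 2*K + 2*j + 1) ` {0..<m} = {}" by auto presburger
  have c1: "card ((\<lambda>j. 2*j) ` {0..<m}) = nat m" by (subst card_image) (auto simp: inj_on_def)
  have c2: "card ((\<lambda>j. 2*K + 2*j + 1) ` {0..<m}) = nat m" by (subst card_image) (auto simp: inj_on_def)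
  show ?thesis unfolding eq by (subst card_Un_disjoint) (use disj c1 c2 in auto)
qed

lemma lower_bound:
  fixes i :: int and k :: nat
  assumes "i \<ge> 1" "int k \<ge> i + 2"
  shows "ereal ((real k - real_of_int i - 1) / (2 * real k)) \<le> indep_ratio {1, 2 * i + 1, 2 * int k}"
proof -
  define K where "K = int k"
  define R where "R = {r. \<exists>j. 0 \<le> j \<and> j < K - i - 1 \<and> (r = 2*j \<or> r = 2*K + 2*j + 1)}"
  have KK: "K \<ge> i + 2" using assms K_def by simp
  have Rsub: "R \<subseteq> {0..<4*K}" unfolding R_def using KK assms(1) by auto
  have cR: "card R = 2 * nat (K - i - 1)" unfolding R_def by (rule card_R) (use KK in simp)
  have ind: "indep_dist {1, 2*i+1, 2*K} {x. \<exists>q. \<exists>r\<in>R. x = q*(4*K) + r}"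
    unfolding R_def by (rule indep_constr[OF assms(1) KK])
  have "ereal (real (card R) / real_of_int (4*K)) \<le> density {x. \<exists>q. \<exists>r\<in>R. x = q*(4*K) + r}"
    by (rule density_lower) (use KK Rsub assms(1) in auto)
  also have "\<dots> \<le> indep_ratio {1, 2*i+1, 2*K}" unfolding indep_ratio_def
    by (rule SUP_upper) (use ind in simp)
  finally have *: "ereal (real (card R) / real_of_int (4*K)) \<le> indep_ratio {1, 2*i+1, 2*K}" .
  have "real (card R) = 2 * (real k - real_of_int i - 1)" using cR KK unfolding K_def by simp
  moreover have kpos: "real k > 0" using KK assms(1) K_def by simp
  ultimately have "real (card R) / real_of_int (4*K) = (real k - real_of_int i - 1) / (2 * real k)"
    unfolding K_def by (simp add: field_simps)
  thus ?thesis using * unfolding K_def by simp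
qed

theorem theorem23:
  fixes i :: int
  assumes "i \<ge> 1"
  shows "(\<lambda>k::nat. indep_ratio {1, 2 * i + 1, 2 * int k}) \<longlonglongrightarrow> ereal (1 / 2)"
proof (rule tendsto_sandwich)
  show "\<forall>\<^sub>F k in sequentially. ereal ((real k - real_of_int i - 1) / (2 * real k)) \<le> indep_ratio {1, 2 * i + 1, 2 * int k}"
    unfolding eventually_sequentially
    by (rule exI[of _ "nat (i + 2)"]) (use assms in \<open>auto intro!: lower_bound\<close>)
  show "\<forall>\<^sub>F k in sequentially. indep_ratio {1, 2 * i + 1, 2 * int k} \<le> ereal (1/2)"
    unfolding indep_ratio_def
    by (intro always_eventually allI SUP_least) (auto intro: density_upper)
  have "(\<lambda>k::nat. (real k - real_of_int i - 1) / (2 * real k)) \<longlonglongrightarrow> 1/2" by real_asymp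
  thus "(\<lambda>k::nat. ereal ((real k - real_of_int i - 1) / (2 * real k))) \<longlonglongrightarrow> ereal (1/2)"
    by (rule tendsto_ereal)
  show "(\<lambda>k::nat. ereal (1/2)) \<longlonglongrightarrow> ereal (1/2)" by simp
qed

end
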